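(* Let $\varphi$ be an $\mathcal L$-sentence with $\mathbb N\models\Pi(\ulcorner\varphi\urcorner)$, and let $\alpha$ be an ordinal such that $(T_\alpha,P_\alpha)$ is consistent. Then both sequents $\varphi\Rightarrow\neg\mathrm T\varphi$ and $\neg\mathrm T\varphi\Rightarrow\varphi$ hold in $(\mathbb N,T_\alpha,P_\alpha)$.
   Context: Language. Let $\mathcal L_{\mathbb N}$ be the language of first-order Peano arithmetic and $\mathcal L=\mathcal L_{\mathbb N}\cup\{\mathrm T,\mathrm P\}$ with unary predicates $\mathrm T,\mathrm P$. $\mathcal L$-formulas are in Tait style: literals are $s=t$, $s\neq t$, $\mathrm Tt$, $\neg\mathrm Tt$, $\mathrm Pt$, $\neg\mathrm Pt$; formulas are built from literals by $\wedge,\vee,\forall,\exists$; negation of an arbitrary formula is defined by De Morgan dualities with $\neg\neg\varphi:=\varphi$. A standard Gödel numbering is fixed; $\#e$ is the code of $e$, $\ulcorner e\urcorner$ the numeral of $\#e$, $\mathrm{val}(t)$ the value of a closed term $t$, $\dot\neg$ the primitive recursive function with $\dot\neg(\#\varphi)=\#\neg\varphi$; $\mathrm T\varphi,\mathrm P\varphi$ abbreviate $\mathrm T\ulcorner\varphi\urcorner,\mathrm P\ulcorner\varphi\urcorner$. Semantics. A partial model is $(\mathbb N,T,P)$ with $\mathbb N$ the standard model and $T=(T^+,T^-)$, $P=(P^+,P^-)$ pairs of subsets of $\omega$. Strong Kleene satisfaction $\models_{SK}$: arithmetic literals evaluated in $\mathbb N$; $\mathrm Tt$ satisfied iff $\mathrm{val}(t)\in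 T^+$, $\neg\mathrm Tt$ iff $\mathrm{val}(t)\in T^-$, likewise for $\mathrm P$ with $P^\pm$; conjunction iff both, disjunction iff at least one, $\forall x\varphi(x)$ iff all numeral instances, $\exists x\varphi(x)$ iff some numeral instance. A sequent $\Gamma\Rightarrow\Delta$ of sentences holds in $(\mathbb N,T,P)$ iff, whenever all members of $\Gamma$ are satisfied, some member of $\Delta$ is. $(T,P)$ is consistent iff $T^+\cap T^-=\emptyset$ and $P^+\cap P^-=\emptyset$. Base paradoxicality. $\mathrm{PA}[\mathrm{SK}]$ is the two-sided sequent calculus for Strong Kleene logic with identity in $\mathcal L$ (initial sequents $\varphi\Rightarrow\varphi$, cut, weakening, the rule from $\Gamma\Rightarrow\Delta,\varphi$ infer $\neg\varphi,\Gamma\Rightarrow\Delta$, usual rules for $\wedge,\vee,\forall,\exists$, reflexivity $\Rightarrow t=t$, replacement from $\Gamma\Rightarrow\Delta,\varphi(t)$ infer $\Gamma\Rightarrow\Delta,s\neq t,\varphi(s)$) plus the initial sequents of Peano arithmetic and the induction rule for all $\mathcal L$-formulas. A sentence $\varphi$ is base paradoxical iff $\mathrm{PA}[\mathrm{SK}]$ derives $\varphi\Leftrightarrow\neg\mathrm T\varphi$ and $\neg\varphi\Leftrightarrow\mathrm T\varphi$ ($\Leftrightarrow$ meaning both sequents). $B(x)$ is an $\mathcal L_{\mathbb N}$-formula defining in $\mathbb N$ the set of codes of base paradoxical sentences, and $\Pi(x):=B(x)\vee B(\dot\neg x)$. Jump and sequence. Let $\mathscr P(x)$ be the $\mathcal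 L$-formula which is the disjunction of: (1) $x$ codes a sentence and $\Pi(x)$; (2) $x$ codes a sentence $\mathrm Tt$ ($t$ a closed term) and $\mathrm P(\mathrm{val}(t))$; (3) $x$ codes a sentence $\neg\mathrm Tt$ and $\mathrm P(\mathrm{val}(t))$; (4) $x$ codes a sentence $\psi\wedge\theta$ and $(\mathrm P\psi\wedge\mathrm P\theta)\vee(\mathrm T\psi\wedge\mathrm P\theta)\vee(\mathrm T\theta\wedge\mathrm P\psi)$; (5) $x$ codes a sentence $\psi\vee\theta$ and $(\mathrm P\psi\wedge\mathrm P\theta)\vee(\neg\mathrm T\psi\wedge\mathrm P\theta)\vee(\neg\mathrm T\theta\wedge\mathrm P\psi)$; (6) $x$ codes a sentence $\forall v\psi$ and $\exists y\,\mathrm P\psi(\dot y)\wedge\forall y(\mathrm P\psi(\dot y)\vee\mathrm T\psi(\dot y))$; (7) $x$ codes a sentence $\exists v\psi$ and $\exists y\,\mathrm P\psi(\dot y)\wedge\forall y(\mathrm P\psi(\dot y)\vee\neg\mathrm T\psi(\dot y))$; here $\psi(\dot y)$ is the code of the result of substituting the numeral of $y$ for $v$. Write $\mathscr P(\varphi)$ for $\mathscr P(\ulcorner\varphi\urcorner)$. Define $\Gamma_{\mathscr{TP}}(T,P)=\big((\{\#\varphi:(\mathbb N,T,P)\models_{SK}\varphi\},\{\#\varphi:(\mathbb N,T,P)\models_{SK}\neg\varphi\}),(\{\#\varphi:(\mathbb N,T,P)\models_{SK}\mathscr P(\varphi)\},\{\#\varphi:(\mathbb N,T,P)\models_{SK}\varphi\vee\neg\varphi\})\big)$,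 $\varphi$ ranging over $\mathcal L$-sentences. Define $(T_0,P_0)=((\emptyset,\emptyset),(\emptyset,\emptyset))$, $(T_{\beta+1},P_{\beta+1})=\Gamma_{\mathscr{TP}}(T_\beta,P_\beta)$, $(T_\lambda,P_\lambda)=\bigcup_{\beta<\lambda}(T_\beta,P_\beta)$ (componentwise union) for limit $\lambda$. *)

theory Defs
  imports Main "HOL-Library.Nat_Bijection"
begin

datatype trm = Var nat | Zer | Sc trm | Pl trm trm | Tm trm trm

datatype fm =
    Eq trm trm | Neq trm trm
  | Tr trm | NTr trm
  | Pr trm | NPr trm
  | Conj fm fm | Disj fm fm
  | All nat fm | Ex nat fm

text \<open>Negation defined by De Morgan dualities (so neg (neg phi) = phi).\<close>
fun neg :: "fm \<Rightarrow> fm" where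
  "neg (Eq s t) = Neq s t"
| "neg (Neq s t) = Eq s t"
| "neg (Tr t) = NTr t"
| "neg (NTr t) = Tr t"
| "neg (Pr t) = NPr t"
| "neg (NPr t) = Pr t"
| "neg (Conj a b) = Disj (neg a) (neg b)"
| "neg (Disj a b) = Conj (neg a) (neg b)"
| "neg (All v a) = Ex v (neg a)"
| "neg (Ex v a) = All v (neg a)"

fun vars_t :: "trm \<Rightarrow> nat set" where
  "vars_t (Var n) = {n}"
| "vars_t Zer = {}"
| "vars_t (Sc t) = vars_t t"
| "vars_t (Pl s t) = vars_t s \<union> vars_t t"
| "vars_t (Tm s t) = vars_t s \<union> vars_t t"

fun fv :: "fm \<Rightarrow> nat set" where
  "fv (Eq s t) = vars_t s \<union> vars_t t"
| "fv (Neq s t) = vars_t s \<union> vars_t t"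
| "fv (Tr t) = vars_t t"
| "fv (NTr t) = vars_t t"
| "fv (Pr t) = vars_t t"
| "fv (NPr t) = vars_t t"
| "fv (Conj a b) = fv a \<union> fv b"
| "fv (Disj a b) = fv a \<union> fv b"
| "fv (All v a) = fv a - {v}"
| "fv (Ex v a) = fv a - {v}"

definition closed_trm :: "trm \<Rightarrow> bool" where
  "closed_trm t \<longleftrightarrow> vars_t t = {}"

definition sentence :: "fm \<Rightarrow> bool" where
  "sentence \<phi> \<longleftrightarrow> fv \<phi> = {}"

fun subst_t :: "nat \<Rightarrow> trm \<Rightarrow> trm \<Rightarrow> trm" where
  "subst_t v u (Var n) = (if n = v then u else Var n)"
| "subst_t v u Zer = Zer"
| "subst_t v u (Sc t) = Sc (subst_t v u t)"
| "subst_t v u (Pl s t) = Pl (subst_t v u s) (subst_t v u t)"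
| "subst_t v u (Tm s t) = Tm (subst_t v u s) (subst_t v u t)"

fun subst :: "nat \<Rightarrow> trm \<Rightarrow> fm \<Rightarrow> fm" where
  "subst v u (Eq s t) = Eq (subst_t v u s) (subst_t v u t)"
| "subst v u (Neq s t) = Neq (subst_t v u s) (subst_t v u t)"
| "subst v u (Tr t) = Tr (subst_t v u t)"
| "subst v u (NTr t) = NTr (subst_t v u t)"
| "subst v u (Pr t) = Pr (subst_t v u t)"
| "subst v u (NPr t) = NPr (subst_t v u t)"
| "subst v u (Conj a b) = Conj (subst v u a) (subst v u b)"
| "subst v u (Disj a b) = Disj (subst v u a) (subst v u b)"
| "subst v u (All w a) = (if v = w then All w a else All w (subst v u a))"
| "subst v u (Ex w a) = (if v = w then Ex w a else Ex w (subst v u a))"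

fun freefor :: "trm \<Rightarrow> nat \<Rightarrow> fm \<Rightarrow> bool" where
  "freefor u v (Conj a b) = (freefor u v a \<and> freefor u v b)"
| "freefor u v (Disj a b) = (freefor u v a \<and> freefor u v b)"
| "freefor u v (All w a) = (v \<notin> fv (All w a) \<or> (w \<notin> vars_t u \<and> freefor u v a))"
| "freefor u v (Ex w a) = (v \<notin> fv (Ex w a) \<or> (w \<notin> vars_t u \<and> freefor u v a))"
| "freefor u v _ = True"

fun code_t :: "trm \<Rightarrow> nat" where
  "code_t (Var n) = prod_encode (0, n)"
| "code_t Zer = prod_encode (1, 0)"
| "code_t (Sc t) = prod_encode (2, code_t t)"
| "code_t (Pl s t) = prod_encode (3, prod_encode (code_t s, code_t t))"
| "code_t (Tm s t) = prod_encode (4, prod_encode (code_t s, code_t t))"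

fun code :: "fm \<Rightarrow> nat" where
  "code (Eq s t) = prod_encode (0, prod_encode (code_t s, code_t t))"
| "code (Neq s t) = prod_encode (1, prod_encode (code_t s, code_t t))"
| "code (Tr t) = prod_encode (2, code_t t)"
| "code (NTr t) = prod_encode (3, code_t t)"
| "code (Pr t) = prod_encode (4, code_t t)"
| "code (NPr t) = prod_encode (5, code_t t)"
| "code (Conj a b) = prod_encode (6, prod_encode (code a, code b))"
| "code (Disj a b) = prod_encode (7, prod_encode (code a, code b))"
| "code (All v a) = prod_encode (8, prod_encode (v, code a))"
| "code (Ex v a) = prod_encode (9, prod_encode (v, code a))"

fun num :: "nat \<Rightarrow> trm" where
  "num 0 = Zer"
| "num (Suc n) = Sc (num n)"

definition quote :: "fm \<Rightarrow> trm" where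
  "quote \<phi> = num (code \<phi>)"

text \<open>Value of a term in N (variables get value 0; only used for closed terms).\<close>
fun val :: "trm \<Rightarrow> nat" where
  "val (Var n) = 0"
| "val Zer = 0"
| "val (Sc t) = Suc (val t)"
| "val (Pl s t) = val s + val t"
| "val (Tm s t) = val s * val t"

text \<open>A partial model: ((T+, T-), (P+, P-)).\<close>
type_synonym model = "(nat set \<times> nat set) \<times> (nat set \<times> nat set)"

definition Tp :: "model \<Rightarrow> nat set" where "Tp M = fst (fst M)"
definition Tn :: "model \<Rightarrow> nat set" where "Tn M = snd (fst M)"
definition Pp :: "model \<Rightarrow> nat set" where "Pp M = fst (snd M)"
definition Pn :: "model \<Rightarrow> nat set" where "Pn M = snd (snd M)"

fun fsize :: "fm \<Rightarrow> nat" where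
  "fsize (Conj a b) = fsize a + fsize b + 1"
| "fsize (Disj a b) = fsize a + fsize b + 1"
| "fsize (All v a) = fsize a + 1"
| "fsize (Ex v a) = fsize a + 1"
| "fsize _ = 1"

lemma fsize_subst [simp]: "fsize (subst v u a) = fsize a"
  by (induction a) auto

function sat :: "model \<Rightarrow> fm \<Rightarrow> bool" where
  "sat M (Eq s t) = (val s = val t)"
| "sat M (Neq s t) = (val s \<noteq> val t)"
| "sat M (Tr t) = (val t \<in> Tp M)"
| "sat M (NTr t) = (val t \<in> Tn M)"
| "sat M (Pr t) = (val t \<in> Pp M)"
| "sat M (NPr t) = (val t \<in> Pn M)"
| "sat M (Conj a b) = (sat M a \<and> sat M b)"
| "sat M (Disj a b) = (sat M a \<or> sat M b)"
| "sat M (All v a) = (\<forall>n. sat M (subst v (num n) a))"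
| "sat M (Ex v a) = (\<exists>n. sat M (subst v (num n) a))"
  by pat_completeness auto
termination by (relation "measure (\<lambda>(M, a). fsize a)") auto

definition holds :: "model \<Rightarrow> fm list \<Rightarrow> fm list \<Rightarrow> bool" where
  "holds M \<Gamma> \<Delta> \<longleftrightarrow> ((\<forall>\<phi>\<in>set \<Gamma>. sat M \<phi>) \<longrightarrow> (\<exists>\<psi>\<in>set \<Delta>. sat M \<psi>))"

definition consistent :: "model \<Rightarrow> bool" where
  "consistent M \<longleftrightarrow> Tp M \<inter> Tn M = {} \<and> Pp M \<inter> Pn M = {}"

definition fvs :: "fm set \<Rightarrow> nat set" where
  "fvs \<Gamma> = \<Union> (fv ` \<Gamma>)"

inductive pask :: "fm set \<Rightarrow> fm set \<Rightarrow> bool" where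
  init: "pask {\<phi>} {\<phi>}"
| cut: "pask \<Gamma> (insert \<phi> \<Delta>) \<Longrightarrow> pask (insert \<phi> \<Gamma>) \<Delta> \<Longrightarrow> pask \<Gamma> \<Delta>"
| weak: "pask \<Gamma> \<Delta> \<Longrightarrow> finite \<Gamma>' \<Longrightarrow> finite \<Delta>' \<Longrightarrow> pask (\<Gamma> \<union> \<Gamma>') (\<Delta> \<union> \<Delta>')"
| negL: "pask \<Gamma> (insert \<phi> \<Delta>) \<Longrightarrow> pask (insert (neg \<phi>) \<Gamma>) \<Delta>"
| conjL: "pask (insert a (insert b \<Gamma>)) \<Delta> \<Longrightarrow> pask (insert (Conj a b) \<Gamma>) \<Delta>"
| conjR: "pask \<Gamma> (insert a \<Delta>) \<Longrightarrow> pask \<Gamma> (insert b \<Delta>) \<Longrightarrow> pask \<Gamma> (insert (Conj a b) \<Delta>)"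
| disjL: "pask (insert a \<Gamma>) \<Delta> \<Longrightarrow> pask (insert b \<Gamma>) \<Delta> \<Longrightarrow> pask (insert (Disj a b) \<Gamma>) \<Delta>"
| disjR: "pask \<Gamma> (insert a (insert b \<Delta>)) \<Longrightarrow> pask \<Gamma> (insert (Disj a b) \<Delta>)"
| allL: "freefor t v a \<Longrightarrow> pask (insert (subst v t a) \<Gamma>) \<Delta> \<Longrightarrow> pask (insert (All v a) \<Gamma>) \<Delta>"
| allR: "freefor (Var w) v a \<Longrightarrow> w \<notin> fvs \<Gamma> \<Longrightarrow> w \<notin> fvs \<Delta> \<Longrightarrow> w \<notin> fv (All v a) \<Longrightarrow>
         pask \<Gamma> (insert (subst v (Var w) a) \<Delta>) \<Longrightarrow> pask \<Gamma> (insert (All v a) \<Delta>)"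
| exL: "freefor (Var w) v a \<Longrightarrow> w \<notin> fvs \<Gamma> \<Longrightarrow> w \<notin> fvs \<Delta> \<Longrightarrow> w \<notin> fv (Ex v a) \<Longrightarrow>
         pask (insert (subst v (Var w) a) \<Gamma>) \<Delta> \<Longrightarrow> pask (insert (Ex v a) \<Gamma>) \<Delta>"
| exR: "freefor t v a \<Longrightarrow> pask \<Gamma> (insert (subst v t a) \<Delta>) \<Longrightarrow> pask \<Gamma> (insert (Ex v a) \<Delta>)"
| refl: "pask {} {Eq t t}"
| repl: "freefor t v a \<Longrightarrow> freefor s v a \<Longrightarrow> pask \<Gamma> (insert (subst v t a) \<Delta>) \<Longrightarrow>
         pask \<Gamma> (insert (Neq s t) (insert (subst v s a) \<Delta>))"
| pa_succ_zero: "pask {Eq (Sc s) Zer} {}"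
| pa_succ_inj: "pask {Eq (Sc s) (Sc t)} {Eq s t}"
| pa_plus_zero: "pask {} {Eq (Pl s Zer) s}"
| pa_plus_succ: "pask {} {Eq (Pl s (Sc t)) (Sc (Pl s t))}"
| pa_times_zero: "pask {} {Eq (Tm s Zer) Zer}"
| pa_times_succ: "pask {} {Eq (Tm s (Sc t)) (Pl (Tm s t) s)}"
| pa_eq_decidable: "pask {} {Eq s t, Neq s t}"
| ind_rule: "v \<notin> fvs \<Gamma> \<Longrightarrow> v \<notin> fvs \<Delta> \<Longrightarrow> freefor t v a \<Longrightarrow> freefor (Sc (Var v)) v a \<Longrightarrow>
         pask (insert a \<Gamma>) (insert (subst v (Sc (Var v)) a) \<Delta>) \<Longrightarrow>
         pask (insert (subst v Zer a) \<Gamma>) (insert (subst v t a) \<Delta>)"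

definition base_paradoxical :: "fm \<Rightarrow> bool" where
  "base_paradoxical \<phi> \<longleftrightarrow> sentence \<phi> \<and>
     pask {\<phi>} {neg (Tr (quote \<phi>))} \<and> pask {neg (Tr (quote \<phi>))} {\<phi>} \<and>
     pask {neg \<phi>} {Tr (quote \<phi>)} \<and> pask {Tr (quote \<phi>)} {neg \<phi>}"

text \<open>N |= Pi(code phi), where B defines (the codes of) the base paradoxical sentences
  and Pi(x) = B(x) \/ B(neg x).\<close>
definition Pi :: "fm \<Rightarrow> bool" where
  "Pi \<phi> \<longleftrightarrow> base_paradoxical \<phi> \<or> base_paradoxical (neg \<phi>)"

text \<open>SK-satisfaction of the L-formula script-P(code phi) in (N,T,P), for a sentence phi,
  written out clause by clause (arithmetical parts are evaluated classically in N).\<close>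
definition Pcond :: "model \<Rightarrow> fm \<Rightarrow> bool" where
  "Pcond M \<phi> \<longleftrightarrow> Pi \<phi> \<or>
    (case \<phi> of
       Tr t \<Rightarrow> val t \<in> Pp M
     | NTr t \<Rightarrow> val t \<in> Pp M
     | Conj a b \<Rightarrow> (code a \<in> Pp M \<and> code b \<in> Pp M) \<or> (code a \<in> Tp M \<and> code b \<in> Pp M)
                   \<or> (code b \<in> Tp M \<and> code a \<in> Pp M)
     | Disj a b \<Rightarrow> (code a \<in> Pp M \<and> code b \<in> Pp M) \<or> (code a \<in> Tn M \<and> code b \<in> Pp M)
                   \<or> (code b \<in> Tn M \<and> code a \<in> Pp M)
     | All v a \<Rightarrow> (\<exists>n. code (subst v (num n) a) \<in> Pp M) \<and>
                   (\<forall>n. code (subst v (num n) a) \<in> Pp M \<or> code (subst v (num n) a) \<in> Tp M)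
     | Ex v a \<Rightarrow> (\<exists>n. code (subst v (num n) a) \<in> Pp M) \<and>
                   (\<forall>n. code (subst v (num n) a) \<in> Pp M \<or> code (subst v (num n) a) \<in> Tn M)
     | _ \<Rightarrow> False)"

definition jump :: "model \<Rightarrow> model" where
  "jump M =
    (({code \<phi> | \<phi>. sentence \<phi> \<and> sat M \<phi>}, {code \<phi> | \<phi>. sentence \<phi> \<and> sat M (neg \<phi>)}),
     ({code \<phi> | \<phi>. sentence \<phi> \<and> Pcond M \<phi>}, {code \<phi> | \<phi>. sentence \<phi> \<and> sat M (Disj \<phi> (neg \<phi>))}))"

text \<open>Ordinals are represented by elements of well-ordered types: the stage at alpha
  is defined by transfinite recursion along the predecessors of alpha.\<close>

definition munion :: "model set \<Rightarrow> model" where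
  "munion S = ((\<Union> (Tp ` S), \<Union> (Tn ` S)), (\<Union> (Pp ` S), \<Union> (Pn ` S)))"

definition imm_pred :: "'a::wellorder \<Rightarrow> 'a \<Rightarrow> bool" where
  "imm_pred a b \<longleftrightarrow> b < a \<and> (\<forall>c. \<not> (b < c \<and> c < a))"

definition stage :: "'a::wellorder \<Rightarrow> model" where
  "stage = wfrec {(x, y). x < y}
     (\<lambda>f a. if \<exists>b. imm_pred a b then jump (f (THE b. imm_pred a b))
            else munion (f ` {b. b < a}))"

end

theory Submission
  imports Defs
begin

fun evalt :: "(nat \<Rightarrow> nat) \<Rightarrow> trm \<Rightarrow> nat" where
  "evalt e (Var n) = e n"
| "evalt e Zer = 0"
| "evalt e (Sc t) = Suc (evalt e t)"
| "evalt e (Pl s t) = evalt e s + evalt e t"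
| "evalt e (Tm s t) = evalt e s * evalt e t"

fun satE :: "model \<Rightarrow> (nat \<Rightarrow> nat) \<Rightarrow> fm \<Rightarrow> bool" where
  "satE M e (Eq s t) = (evalt e s = evalt e t)"
| "satE M e (Neq s t) = (evalt e s \<noteq> evalt e t)"
| "satE M e (Tr t) = (evalt e t \<in> Tp M)"
| "satE M e (NTr t) = (evalt e t \<in> Tn M)"
| "satE M e (Pr t) = (evalt e t \<in> Pp M)"
| "satE M e (NPr t) = (evalt e t \<in> Pn M)"
| "satE M e (Conj a b) = (satE M e a \<and> satE M e b)"
| "satE M e (Disj a b) = (satE M e a \<or> satE M e b)"
| "satE M e (All v a) = (\<forall>n. satE M (e(v:=n)) a)"
| "satE M e (Ex v a) = (\<exists>n. satE M (e(v:=n)) a)"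

lemma evalt_coinc: "(\<forall>x\<in>vars_t t. e x = e' x) \<Longrightarrow> evalt e t = evalt e' t"
  by (induction t) auto

lemma satE_coinc: "(\<forall>x\<in>fv a. e x = e' x) \<Longrightarrow> satE M e a = satE M e' a"
proof (induction a arbitrary: e e')
  case (All v a)
  have "\<And>n. satE M (e(v:=n)) a = satE M (e'(v:=n)) a"
    using All.prems by (intro All.IH) auto
  then show ?case by simp
next
  case (Ex v a)
  have "\<And>n. satE M (e(v:=n)) a = satE M (e'(v:=n)) a"
    using Ex.prems by (intro Ex.IH) auto
  then show ?case by simp
qed (simp_all, (metis Un_iff evalt_coinc)+)

lemma evalt_subst: "evalt e (subst_t v u t) = evalt (e(v:=evalt e u)) t"
  by (induction t) auto

lemma subst_t_nofv: "v \<notin> vars_t t \<Longrightarrow> subst_t v u t = t"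
  by (induction t) auto

lemma subst_nofv: "v \<notin> fv a \<Longrightarrow> subst v u a = a"
proof (induction a)
qed (auto simp: subst_t_nofv)

lemma satE_subst: "freefor u v a \<Longrightarrow> satE M e (subst v u a) = satE M (e(v:=evalt e u)) a"
proof (induction a arbitrary: e)
  case (All w a)
  show ?case
  proof (cases "v = w")
    case True then show ?thesis by (simp only: subst.simps if_True satE.simps fun_upd_upd simp_thms)
  next
    case False
    show ?thesis
    proof (cases "v \<in> fv (All w a)")
      case False
      have e1: "subst v u (All w a) = All w a" using subst_nofv False by blast
      have "satE M e (All w a) = satE M (e(v:=evalt e u)) (All w a)"
        using False by (intro satE_coinc) auto
      then show ?thesis unfolding e1 .
    next
      case True
      with All.prems \<open>v \<noteq> w\<close> have w: "w \<notin> vars_t u" and ff: "freefor u v a" by auto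
      have "satE M (e(w:=n)) (subst v u a) = satE M (e(v:=evalt e u, w:=n)) a" for n
      proof -
        have ev: "evalt (e(w:=n)) u = evalt e u" using w by (intro evalt_coinc) auto
        have "satE M (e(w:=n)) (subst v u a) = satE M (e(w:=n, v:=evalt (e(w:=n)) u)) a"
          by (rule All.IH[OF ff])
        also have "e(w:=n, v:=evalt (e(w:=n)) u) = e(v:=evalt e u, w:=n)"
          unfolding ev using \<open>v \<noteq> w\<close> by (metis fun_upd_twist)
        finally show ?thesis .
      qed
      then show ?thesis using \<open>v \<noteq> w\<close> by (simp add: fun_upd_def)
    qed
  qed
next
  case (Ex w a)
  show ?case
  proof (cases "v = w")
    case True then show ?thesis by (simp only: subst.simps if_True satE.simps fun_upd_upd simp_thms)
  next
    case False
    show ?thesis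
    proof (cases "v \<in> fv (Ex w a)")
      case False
      have e1: "subst v u (Ex w a) = Ex w a" using subst_nofv False by blast
      have "satE M e (Ex w a) = satE M (e(v:=evalt e u)) (Ex w a)"
        using False by (intro satE_coinc) auto
      then show ?thesis unfolding e1 .
    next
      case True
      with Ex.prems \<open>v \<noteq> w\<close> have w: "w \<notin> vars_t u" and ff: "freefor u v a" by auto
      have "satE M (e(w:=n)) (subst v u a) = satE M (e(v:=evalt e u, w:=n)) a" for n
      proof -
        have ev: "evalt (e(w:=n)) u = evalt e u" using w by (intro evalt_coinc) auto
        have "satE M (e(w:=n)) (subst v u a) = satE M (e(w:=n, v:=evalt (e(w:=n)) u)) a"
          by (rule Ex.IH[OF ff])
        also have "e(w:=n, v:=evalt (e(w:=n)) u) = e(v:=evalt e u, w:=n)"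
          unfolding ev using \<open>v \<noteq> w\<close> by (metis fun_upd_twist)
        finally show ?thesis .
      qed
      then show ?thesis using \<open>v \<noteq> w\<close> by (simp add: fun_upd_def)
    qed
  qed
qed (simp_all add: evalt_subst)

lemma neg_neg[simp]: "neg (neg a) = a"
  by (induction a) auto

lemma fv_neg[simp]: "fv (neg a) = fv a"
  by (induction a) auto

lemma satE_neg_cons: "consistent M \<Longrightarrow> satE M e (neg a) \<Longrightarrow> \<not> satE M e a"
  by (induction a arbitrary: e) (auto simp: consistent_def)

lemma vars_num[simp]: "vars_t (num n) = {}"
  by (induction n) auto

lemma val_num[simp]: "val (num n) = n"
  by (induction n) auto

lemma evalt_num[simp]: "evalt e (num n) = n"
  by (induction n) auto

lemma freefor_closed: "vars_t u = {} \<Longrightarrow> freefor u v a"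
  by (induction u v a rule: freefor.induct) auto

lemma evalt_val: "evalt (\<lambda>_. 0) t = val t"
  by (induction t) auto

lemma sat_satE: "sat M a = satE M (\<lambda>_. 0) a"
proof (induction M a rule: sat.induct)
  case (9 M v a)
  then show ?case by (simp add: satE_subst freefor_closed)
next
  case (10 M v a)
  then show ?case by (simp add: satE_subst freefor_closed)
qed (simp_all add: evalt_val)

lemma fvs_coinc: "w \<notin> fvs \<Gamma> \<Longrightarrow> \<phi> \<in> \<Gamma> \<Longrightarrow> satE M (e(w:=n)) \<phi> = satE M e \<phi>"
  by (rule satE_coinc) (auto simp: fvs_def)

lemma sound: "pask \<Gamma> \<Delta> \<Longrightarrow> consistent M \<Longrightarrow>
   (\<forall>\<phi>\<in>\<Gamma>. satE M e \<phi>) \<Longrightarrow> (\<exists>\<psi>\<in>\<Delta>. satE M e \<psi>)"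
proof (induction arbitrary: e rule: pask.induct)
  case (negL \<Gamma> \<phi> \<Delta>)
  then show ?case using satE_neg_cons by blast
next
  case (allL t v a \<Gamma> \<Delta>)
  then show ?case by (auto simp: satE_subst)
next
  case (exR t v a \<Gamma> \<Delta>)
  then show ?case by (auto simp: satE_subst)
next
  case (allR w v a \<Gamma> \<Delta>)
  show ?case
  proof (cases "\<exists>\<psi>\<in>\<Delta>. satE M e \<psi>")
    case True then show ?thesis by blast
  next
    case False
    have "satE M (e(v:=n)) a" for n
    proof -
      have "\<forall>\<phi>\<in>\<Gamma>. satE M (e(w:=n)) \<phi>" using allR.prems(2) fvs_coinc[OF allR.hyps(2)] by blast
      then have "\<exists>\<psi>\<in>insert (subst v (Var w) a) \<Delta>. satE M (e(w:=n)) \<psi>"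
        using allR.IH allR.prems(1) by blast
      moreover have "\<not> (\<exists>\<psi>\<in>\<Delta>. satE M (e(w:=n)) \<psi>)" using False fvs_coinc[OF allR.hyps(3)] by blast
      ultimately have "satE M (e(w:=n)) (subst v (Var w) a)" by blast
      then have h: "satE M (e(w:=n, v:=n)) a" using allR.hyps(1) by (simp add: satE_subst)
      show ?thesis
      proof (cases "w = v")
        case True then show ?thesis using h by simp
      next
        case False
        then have "w \<notin> fv a" using allR.hyps(4) by auto
        then show ?thesis using h by (subst satE_coinc[of a _ "e(w:=n, v:=n)"]) auto
      qed
    qed
    then show ?thesis by simp
  qed
next
  case (exL w v a \<Gamma> \<Delta>)
  show ?case
  proof -
    obtain n where n: "satE M (e(v:=n)) a" using exL.prems(2) by auto
    have h: "satE M (e(w:=n, v:=n)) a"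
    proof (cases "w = v")
      case True then show ?thesis using n by simp
    next
      case False
      then have "w \<notin> fv a" using exL.hyps(4) by auto
      then show ?thesis using n by (subst satE_coinc[of a _ "e(v:=n)"]) auto
    qed
    then have "satE M (e(w:=n)) (subst v (Var w) a)" using exL.hyps(1) by (simp add: satE_subst)
    moreover have "\<forall>\<phi>\<in>\<Gamma>. satE M (e(w:=n)) \<phi>" using exL.prems(2) fvs_coinc[OF exL.hyps(2)] by blast
    ultimately have "\<exists>\<psi>\<in>\<Delta>. satE M (e(w:=n)) \<psi>" using exL.IH exL.prems(1) by blast
    then show ?thesis using fvs_coinc[OF exL.hyps(3)] by blast
  qed
next
  case (repl t v a s \<Gamma> \<Delta>)
  then show ?case by (cases "evalt e s = evalt e t") (auto simp: satE_subst)
next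
  case (ind_rule v \<Gamma> \<Delta> t a)
  show ?case
  proof (rule ccontr)
    assume nD: "\<not> (\<exists>\<psi>\<in>insert (subst v t a) \<Delta>. satE M e \<psi>)"
    have G: "\<forall>\<phi>\<in>\<Gamma>. satE M (e(v:=k)) \<phi>" for k
      using ind_rule.prems(2) fvs_coinc[OF ind_rule.hyps(1)] by blast
    have D: "\<not> (\<exists>\<psi>\<in>\<Delta>. satE M (e(v:=k)) \<psi>)" for k
      using nD fvs_coinc[OF ind_rule.hyps(2)] by blast
    have "satE M (e(v:=k)) a" for k
    proof (induction k)
      case 0
      then show ?case using ind_rule.prems(2) by (simp add: satE_subst freefor_closed fun_upd_def)
    next
      case (Suc k)
      then have "\<exists>\<psi>\<in>insert (subst v (Sc (Var v)) a) \<Delta>. satE M (e(v:=k)) \<psi>"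
        using ind_rule.IH ind_rule.prems(1) G by blast
      then have "satE M (e(v:=k)) (subst v (Sc (Var v)) a)" using D by blast
      then have "satE M (e(v:=Suc k)) a" using ind_rule.hyps(4) by (simp add: satE_subst)
      then show ?case by (simp add: fun_upd_def)
    qed
    then have "satE M e (subst v t a)" using ind_rule.hyps(3) by (simp add: satE_subst)
    then show False using nD by blast
  qed
qed auto

lemma sound1: "pask {a} {b} \<Longrightarrow> consistent M \<Longrightarrow> sat M a \<Longrightarrow> sat M b"
  using sound[of "{a}" "{b}" M "\<lambda>_. 0"] by (simp add: sat_satE)

lemma code_t_inj: "code_t s = code_t t \<Longrightarrow> s = t"
proof (induction s arbitrary: t)
qed (case_tac t; simp add: prod_encode_eq)+

lemma code_inj: "code a = code b \<Longrightarrow> a = b"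
proof (induction a arbitrary: b)
qed (case_tac b; auto simp: prod_encode_eq dest: code_t_inj)+

lemma jump_prop: "code \<phi> \<in> Tn (jump M) \<longleftrightarrow> code (neg \<phi>) \<in> Tp (jump M)"
  unfolding jump_def Tn_def Tp_def sentence_def
  by (auto dest!: code_inj)

lemma stage_unfold: "(\<exists>X. stage a = jump X) \<or> stage a = munion (stage ` {b. b < a})"
proof -
  have wfR: "wf {(x::'a, y). x < y}" using wf by simp
  have e: "stage a = (if \<exists>b. imm_pred a b then jump (cut stage {(x, y). x < y} a (THE b. imm_pred a b))
            else munion (cut stage {(x, y). x < y} a ` {b. b < a}))"
    by (rule wfrec[OF wfR, of "\<lambda>f a. if \<exists>b. imm_pred a b then jump (f (THE b. imm_pred a b))
            else munion (f ` {b. b < a})" a, folded stage_def])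
  have "cut stage {(x, y). x < y} a ` {b. b < a} = stage ` {b. b < a}"
    by (auto simp: cut_apply)
  show ?thesis
  proof (cases "\<exists>b. imm_pred a b")
    case True
    then have "stage a = jump (cut stage {(x, y). x < y} a (THE b. imm_pred a b))" using e by simp
    then show ?thesis by blast
  next
    case False
    then show ?thesis using e \<open>cut stage {(x, y). x < y} a ` {b. b < a} = stage ` {b. b < a}\<close> by simp
  qed
qed

lemma stage_prop: "code \<phi> \<in> Tn (stage a) \<longleftrightarrow> code (neg \<phi>) \<in> Tp (stage a)"
proof (induction a arbitrary: \<phi> rule: less_induct)
  case (less a)
  from stage_unfold[of a] show ?case
  proof
    assume "\<exists>X. stage a = jump X"
    then show ?thesis using jump_prop by auto
  next
    assume h: "stage a = munion (stage ` {b. b < a})"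
    show ?thesis unfolding h munion_def Tn_def[symmetric] Tp_def[symmetric]
      using less by (simp add: Tn_def Tp_def)
  qed
qed

theorem mainTheorem5:
  fixes \<alpha> :: "'a::wellorder" and \<phi> :: fm
  assumes "sentence \<phi>"
    and "Pi \<phi>"
    and "consistent (stage \<alpha>)"
  shows "holds (stage \<alpha>) [\<phi>] [neg (Tr (quote \<phi>))] \<and> holds (stage \<alpha>) [neg (Tr (quote \<phi>))] [\<phi>]"
proof -
  let ?M = "stage \<alpha>"
  have key: "sat ?M \<phi> \<longleftrightarrow> code \<phi> \<in> Tn ?M"
    using assms(2) unfolding Pi_def
  proof
    assume bp: "base_paradoxical \<phi>"
    show ?thesis
      using sound1[OF _ assms(3), of \<phi> "neg (Tr (quote \<phi>))"]
            sound1[OF _ assms(3), of "neg (Tr (quote \<phi>))" \<phi>] bp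
      by (auto simp: base_paradoxical_def quote_def)
  next
    assume bp: "base_paradoxical (neg \<phi>)"
    have "sat ?M \<phi> \<longleftrightarrow> code (neg \<phi>) \<in> Tp ?M"
      using sound1[OF _ assms(3), of \<phi> "Tr (quote (neg \<phi>))"]
            sound1[OF _ assms(3), of "Tr (quote (neg \<phi>))" \<phi>] bp
      by (auto simp: base_paradoxical_def quote_def)
    then show ?thesis using stage_prop by blast
  qed
  then show ?thesis by (auto simp: holds_def quote_def)
qed

end
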